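(* Let $f:2^{\mathcal{E}_x}\to\mathbb{R}_{\ge 0}$ be normalized, monotone and submodular, and consider $(\mathrm{P}_1)$ under the constraint TU$_b$ (i.e., maximize $f(\mathcal{E})$ over $\mathcal{E}\subseteq\mathcal{E}_x$ with $|\mathcal{E}|\le k$ and some vertex cover $\mathcal{V}$ of $\mathcal{E}$ with $|\mathcal{V}|\le b$), with optimal value $\mathrm{OPT}_1$. Then the algorithm Edge-Greedy (described in the context) returns a feasible solution $\mathcal{E}_{\mathrm{grd}}$ of this problem with $f(\mathcal{E}_{\mathrm{grd}})\ge\alpha_e(b,k)\cdot\mathrm{OPT}_1$, where $\alpha_e(b,k)=1-\exp\big(-\min\{1,b/k\}\big)$.
   Context: $\mathcal{G}=(\mathcal{V}_x,\mathcal{E}_x)$ is a finite simple undirected graph; $b,k\ge1$ are integers. For $\mathcal{V}\subseteq\mathcal{V}_x$, $\mathsf{edges}(\mathcal{V})$ is the set of edges incident to at least one vertex of $\mathcal{V}$. A set function $h$ is normalized if $h(\varnothing)=0$, monotone if $h(A)\le h(B)$ for $A\subseteq B$, submodular if $h(A)+h(B)\ge h(A\cup B)+h(A\cap B)$. Edge-Greedy: Phase I: start with $\mathcal{E}_{\mathrm{grd}}=\varnothing$; for $\min(b,k)$ iterations (or until no edges remain), add an edge $e^\star\in\arg\max_{e\in\mathcal{E}_x\setminus\mathcal{E}_{\mathrm{grd}}}f(\mathcal{E}_{\mathrm{grd}}\cup\{e\})$. Then let $\mathcal{V}_{\mathrm{grd}}$ be a vertex cover of $\mathcal{E}_{\mathrm{grd}}$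 obtained by choosing one endpoint of each selected edge. Phase II (only if $k>b$): let $\mathcal{E}_{\mathrm{free}}=\mathsf{edges}(\mathcal{V}_{\mathrm{grd}})\setminus\mathcal{E}_{\mathrm{grd}}$; for $\min(|\mathcal{E}_{\mathrm{free}}|,k-b)$ iterations, add an edge $e^\star\in\arg\max_{e\in\mathcal{E}_{\mathrm{free}}\setminus\mathcal{E}_{\mathrm{grd}}}f(\mathcal{E}_{\mathrm{grd}}\cup\{e\})$. Return $(\mathcal{V}_{\mathrm{grd}},\mathcal{E}_{\mathrm{grd}})$. *)

theory Defs
  imports Complex_Main
begin

definition simple_graph :: "'v set \<Rightarrow> 'v set set \<Rightarrow> bool" where
  "simple_graph Vxs Exs \<longleftrightarrow> finite Vxs \<and>
     (\<forall>e\<in>Exs. \<exists>u w. e = {u, w} \<and> u \<noteq> w \<and> u \<in> Vxs \<and> w \<in> Vxs)"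

definition edges_of :: "'v set set \<Rightarrow> 'v set \<Rightarrow> 'v set set" where
  "edges_of Exs V = {e \<in> Exs. e \<inter> V \<noteq> {}}"

definition is_vertex_cover :: "'v set \<Rightarrow> 'v set \<Rightarrow> 'v set set \<Rightarrow> bool" where
  "is_vertex_cover Vxs V E \<longleftrightarrow> V \<subseteq> Vxs \<and> (\<forall>e\<in>E. e \<inter> V \<noteq> {})"

definition normalized :: "('a set \<Rightarrow> real) \<Rightarrow> bool" where
  "normalized h \<longleftrightarrow> h {} = 0"

definition monotone_on_sets :: "'a set \<Rightarrow> ('a set \<Rightarrow> real) \<Rightarrow> bool" where
  "monotone_on_sets X h \<longleftrightarrow> (\<forall>A B. A \<subseteq> B \<and> B \<subseteq> X \<longrightarrow> h A \<le> h B)"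

definition submodular_on :: "'a set \<Rightarrow> ('a set \<Rightarrow> real) \<Rightarrow> bool" where
  "submodular_on X h \<longleftrightarrow> (\<forall>A B. A \<subseteq> X \<and> B \<subseteq> X \<longrightarrow> h A + h B \<ge> h (A \<union> B) + h (A \<inter> B))"

definition TU_feasible :: "'v set \<Rightarrow> 'v set set \<Rightarrow> nat \<Rightarrow> nat \<Rightarrow> 'v set set \<Rightarrow> bool" where
  "TU_feasible Vxs Exs b k E \<longleftrightarrow> E \<subseteq> Exs \<and> card E \<le> k \<and>
     (\<exists>V. is_vertex_cover Vxs V E \<and> card V \<le> b)"

definition OPT1 :: "'v set \<Rightarrow> 'v set set \<Rightarrow> nat \<Rightarrow> nat \<Rightarrow> ('v set set \<Rightarrow> real) \<Rightarrow> real" where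
  "OPT1 Vxs Exs b k f = Max (f ` {E. TU_feasible Vxs Exs b k E})"

text \<open>greedy_run f C S es S': starting from the current set S, the greedy steps
  add, in order, the elements of es; each added element maximizes f(S \<union> {e})
  among the candidates C - S (arbitrary tie-breaking); S' is the final set.\<close>
inductive greedy_run :: "('a set \<Rightarrow> real) \<Rightarrow> 'a set \<Rightarrow> 'a set \<Rightarrow> 'a list \<Rightarrow> 'a set \<Rightarrow> bool"
  for f C where
  Nil: "greedy_run f C S [] S"
| Cons: "\<lbrakk> e \<in> C - S; \<forall>e'\<in>C - S. f (insert e' S) \<le> f (insert e S);
           greedy_run f C (insert e S) es S' \<rbrakk> \<Longrightarrow> greedy_run f C S (e # es) S'"

text \<open>Edge-Greedy: (Vgrd, Egrd) is a possible output (for some tie-breaking and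
  some choice of endpoints).\<close>
definition edge_greedy_output ::
  "'v set set \<Rightarrow> ('v set set \<Rightarrow> real) \<Rightarrow> nat \<Rightarrow> nat \<Rightarrow> 'v set \<Rightarrow> 'v set set \<Rightarrow> bool" where
  "edge_greedy_output Exs f b k Vgrd Egrd \<longleftrightarrow>
     (\<exists>es1 E1 g.
        greedy_run f Exs {} es1 E1 \<and> length es1 = min (min b k) (card Exs) \<and>
        (\<forall>e\<in>E1. g e \<in> e) \<and> Vgrd = g ` E1 \<and>
        (if k > b then
           (let Efree = edges_of Exs Vgrd - E1 in
              \<exists>es2. greedy_run f Efree E1 es2 Egrd \<and> length es2 = min (card Efree) (k - b))
         else Egrd = E1))"

end

theory Submission
  imports Defs
begin

lemma greedy_run_props:
  assumes "greedy_run f C S es S'"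
  shows "S' = S \<union> set es \<and> distinct es \<and> set es \<inter> S = {} \<and> set es \<subseteq> C"
  using assms by (induction rule: greedy_run.induct) auto

lemma submod_sum:
  assumes mono: "monotone_on_sets X f" and sub: "submodular_on X f"
    and S: "S \<subseteq> X" and fin: "finite T" and T: "T \<subseteq> X"
  shows "f (S \<union> T) \<le> f S + (\<Sum>y\<in>T. f (insert y S) - f S)"
  using fin T
proof (induction T rule: finite_induct)
  case empty then show ?case by simp
next
  case (insert x T)
  let ?A = "S \<union> T" and ?B = "insert x S"
  have "f ?A + f ?B \<ge> f (?A \<union> ?B) + f (?A \<inter> ?B)"
    using sub[unfolded submodular_on_def, rule_format, of ?A ?B] insert.prems S by auto
  moreover have "f S \<le> f (?A \<inter> ?B)"
    using mono[unfolded monotone_on_sets_def, rule_format, of S "?A \<inter> ?B"] insert.prems S by auto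
  moreover have "?A \<union> ?B = S \<union> insert x T" by auto
  ultimately have "f (S \<union> insert x T) \<le> f (S \<union> T) + (f (insert x S) - f S)" by simp
  with insert show ?case by simp
qed

lemma greedy_bound:
  assumes "greedy_run f X S es S'"
    and mono: "monotone_on_sets X f" and sub: "submodular_on X f"
    and finX: "finite X" and SX: "S \<subseteq> X"
    and Op: "Op \<subseteq> X" "card Op \<le> k" and k: "k \<ge> 1"
  shows "f Op - f S' \<le> (1 - 1 / real k) ^ length es * (f Op - f S)"
  using assms(1) SX
proof (induction rule: greedy_run.induct)
  case (Nil S) then show ?case by simp
next
  case (Cons e S es S')
  let ?D = "f (insert e S) - f S"
  have finO: "finite Op" using Op finX finite_subset by blast
  have "f Op \<le> f (S \<union> Op)"
    using mono Cons.prems Op unfolding monotone_on_sets_def by auto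
  also have "\<dots> \<le> f S + (\<Sum>y\<in>Op. f (insert y S) - f S)"
    by (rule submod_sum[OF mono sub Cons.prems finO Op(1)])
  also have "(\<Sum>y\<in>Op. f (insert y S) - f S) \<le> (\<Sum>y\<in>Op. ?D)"
  proof (rule sum_mono)
    fix y assume oO: "y \<in> Op"
    show "f (insert y S) - f S \<le> ?D"
    proof (cases "y \<in> S")
      case True
      have "f S \<le> f (insert e S)"
        using mono[unfolded monotone_on_sets_def, rule_format, of S "insert e S"] Cons.prems Cons.hyps(1) by auto
      then show ?thesis using True by (simp add: insert_absorb)
    next
      case False
      then show ?thesis using Cons.hyps(2) oO Op by auto
    qed
  qed
  also have "(\<Sum>y\<in>Op. ?D) = real (card Op) * ?D" by simp
  also have "\<dots> \<le> real k * ?D"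
  proof (rule mult_right_mono)
    show "real (card Op) \<le> real k" using Op by simp
    show "0 \<le> ?D"
      using mono[unfolded monotone_on_sets_def, rule_format, of S "insert e S"] Cons.prems Cons.hyps(1) by auto
  qed
  finally have step: "f Op - f S \<le> real k * ?D" by simp
  have kpos: "real k > 0" using k by simp
  have step2: "f Op - f (insert e S) \<le> (1 - 1 / real k) * (f Op - f S)"
  proof -
    have "?D \<ge> (f Op - f S) / real k" using step kpos by (simp add: divide_simps mult.commute)
    moreover have "(1 - 1 / real k) * (f Op - f S) = (f Op - f S) - (f Op - f S) / real k"
      by (simp add: algebra_simps add_divide_distrib[symmetric])
    ultimately show ?thesis by linarith
  qed
  have IH: "f Op - f S' \<le> (1 - 1 / real k) ^ length es * (f Op - f (insert e S))"
    using Cons.IH Cons.prems Cons.hyps(1) by auto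
  have c0: "0 \<le> (1 - 1 / real k) ^ length es" using k by simp
  have "f Op - f S' \<le> (1 - 1 / real k) ^ length es * ((1 - 1 / real k) * (f Op - f S))"
    using IH mult_left_mono[OF step2 c0] by linarith
  then show ?case by (simp add: ac_simps)
qed

lemma pow_exp_bound:
  assumes "k \<ge> (1::nat)"
  shows "(1 - 1 / real k) ^ m \<le> exp (- (real m / real k))"
proof -
  have "(1 - 1 / real k) ^ m \<le> exp (- (1 / real k)) ^ m"
    apply (rule power_mono)
    using exp_ge_add_one_self[of "- (1 / real k)"] assms by auto
  also have "\<dots> = exp (real m * (- (1 / real k)))" by (subst exp_of_nat_mult) simp
  finally show ?thesis by simp
qed

theorem lemma3:
  fixes Vxs :: "'v set" and Exs :: "'v set set" and b k :: nat
    and f :: "'v set set \<Rightarrow> real" and Vgrd :: "'v set" and Egrd :: "'v set set"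
  assumes "simple_graph Vxs Exs" and "b \<ge> 1" and "k \<ge> 1"
    and "\<forall>E\<subseteq>Exs. f E \<ge> 0"
    and "normalized f" and "monotone_on_sets Exs f" and "submodular_on Exs f"
    and "edge_greedy_output Exs f b k Vgrd Egrd"
  shows "TU_feasible Vxs Exs b k Egrd \<and> is_vertex_cover Vxs Vgrd Egrd \<and> card Vgrd \<le> b \<and>
         f Egrd \<ge> (1 - exp (- min 1 (real b / real k))) * OPT1 Vxs Exs b k f"
proof -
  note sg = assms(1)
  have finV: "finite Vxs" using sg unfolding simple_graph_def by auto
  have sub_edges: "\<And>e. e \<in> Exs \<Longrightarrow> e \<subseteq> Vxs" using sg unfolding simple_graph_def by auto
  have finX: "finite Exs"
    by (rule finite_subset[of _ "Pow Vxs"]) (use sub_edges finV in auto)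
  obtain es1 E1 g where run1: "greedy_run f Exs {} es1 E1"
    and len1: "length es1 = min (min b k) (card Exs)"
    and g: "\<forall>e\<in>E1. g e \<in> e" and Vg: "Vgrd = g ` E1"
    and ph2: "if k > b then
           (let Efree = edges_of Exs Vgrd - E1 in
              \<exists>es2. greedy_run f Efree E1 es2 Egrd \<and> length es2 = min (card Efree) (k - b))
         else Egrd = E1"
    using assms(8) unfolding edge_greedy_output_def by blast
  have p1: "E1 = set es1" "distinct es1" "set es1 \<subseteq> Exs"
    using greedy_run_props[OF run1] by auto
  have E1X: "E1 \<subseteq> Exs" using p1 by auto
  have cardE1: "card E1 = min (min b k) (card Exs)" using p1 len1 distinct_card by metis
  have finE1: "finite E1" using p1 by simp
  have cardV: "card Vgrd \<le> b"
    using card_image_le[OF finE1, of g] Vg cardE1 by simp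
  have VgV: "Vgrd \<subseteq> Vxs" using Vg g E1X sub_edges by blast
  have E1cov: "\<forall>e\<in>E1. e \<inter> Vgrd \<noteq> {}" using g Vg by blast
  have ph: "E1 \<subseteq> Egrd \<and> Egrd \<subseteq> Exs \<and> card Egrd \<le> k \<and> (\<forall>e\<in>Egrd. e \<inter> Vgrd \<noteq> {})"
  proof (cases "k > b")
    case True
    define Efree where "Efree = edges_of Exs Vgrd - E1"
    obtain es2 where r2: "greedy_run f Efree E1 es2 Egrd"
      and l2: "length es2 = min (card Efree) (k - b)"
      using ph2 True unfolding Efree_def Let_def by auto
    have p2: "Egrd = E1 \<union> set es2" "set es2 \<subseteq> Efree"
      using greedy_run_props[OF r2] by auto
    have "card Egrd \<le> card E1 + card (set es2)" using p2 card_Un_le by metis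
    also have "card (set es2) \<le> k - b" using card_length[of es2] l2 by linarith
    finally have "card Egrd \<le> k" using cardE1 True by linarith
    moreover have "Efree \<subseteq> Exs" "\<forall>e\<in>Efree. e \<inter> Vgrd \<noteq> {}"
      unfolding Efree_def edges_of_def by auto
    ultimately show ?thesis using p2 E1X E1cov by blast
  next
    case False
    then have "Egrd = E1" using ph2 by simp
    then show ?thesis using E1X E1cov cardE1 by simp
  qed
  have feas: "TU_feasible Vxs Exs b k Egrd"
    unfolding TU_feasible_def is_vertex_cover_def using ph VgV cardV by blast
  have cov: "is_vertex_cover Vxs Vgrd Egrd"
    unfolding is_vertex_cover_def using ph VgV by blast
  let ?F = "{E. TU_feasible Vxs Exs b k E}"
  have finF: "finite ?F"
    by (rule finite_subset[of _ "Pow Exs"]) (use finX in \<open>auto simp: TU_feasible_def\<close>)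
  have "{} \<in> ?F" unfolding TU_feasible_def is_vertex_cover_def by auto
  then have neF: "f ` ?F \<noteq> {}" by blast
  obtain Op where OF: "Op \<in> ?F" and Oopt: "f Op = OPT1 Vxs Exs b k f"
    using Max_in[OF finite_imageI[OF finF] neF] unfolding OPT1_def by auto
  have OX: "Op \<subseteq> Exs" and Ok: "card Op \<le> k" using OF unfolding TU_feasible_def by auto
  have fO0: "f Op \<ge> 0" using assms(4) OX by auto
  have f0: "f {} = 0" using assms(5) unfolding normalized_def by simp
  have monoE: "f E1 \<le> f Egrd" using assms(6) ph unfolding monotone_on_sets_def by auto
  let ?a = "1 - exp (- min 1 (real b / real k))"
  have a1: "?a \<le> 1" by simp
  have main: "f E1 \<ge> ?a * f Op"
  proof (cases "card Exs < min b k")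
    case True
    then have "card E1 = card Exs" using cardE1 by simp
    then have "E1 = Exs" using card_subset_eq[OF finX E1X] by simp
    then have "f Op \<le> f E1" using assms(6) OX unfolding monotone_on_sets_def by auto
    moreover have "?a * f Op \<le> f Op" using a1 fO0 by (simp add: mult_left_le_one_le)
    ultimately show ?thesis by linarith
  next
    case False
    then have lm: "length es1 = min b k" using len1 False by (auto simp: min_def)
    have gb: "f Op - f E1 \<le> (1 - 1 / real k) ^ length es1 * (f Op - f {})"
      by (rule greedy_bound[OF run1 assms(6) assms(7) finX _ OX Ok assms(3)]) simp
    have "(1 - 1 / real k) ^ length es1 \<le> exp (- (real (min b k) / real k))"
      using pow_exp_bound[OF assms(3), of "length es1"] lm by simp
    also have "real (min b k) / real k = min 1 (real b / real k)"
      using assms(3) by (cases "b \<le> k") (auto simp: min_def divide_simps)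
    finally have "(1 - 1 / real k) ^ length es1 * f Op \<le> exp (- min 1 (real b / real k)) * f Op"
      using fO0 mult_right_mono by blast
    then show ?thesis using gb f0 by (simp add: algebra_simps)
  qed
  show ?thesis using feas cov cardV main monoE Oopt by simp
qed

end
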